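(* Write $\mathbb{R}^4=\mathbb{R}^3\times\mathbb{R}$ and for $S\in SO(3)$ let $\Sigma_S$ be the linear map $(\mathbf{x},x^4)\mapsto(S\mathbf{x},x^4)$; let $SO_4(3)=\{\Sigma_S:S\in SO(3)\}$. An additive subgroup $\Lambda$ of $\mathbb{R}^4$ satisfies $\Sigma_S(\Lambda)\subseteq\Lambda$ for all $S\in SO(3)$ if and only if $\Lambda=\{\mathbf{0}\}\times H$ or $\Lambda=\mathbb{R}^3\times H$ for some additive subgroup $H$ of $\mathbb{R}$. *)

theory Defs
  imports "HOL-Analysis.Analysis"
begin

definition additive_subgroup :: "'a::ab_group_add set \<Rightarrow> bool" where
  "additive_subgroup L \<longleftrightarrow> 0 \<in> L \<and> (\<forall>x\<in>L. \<forall>y\<in>L. x + y \<in> L) \<and> (\<forall>x\<in>L. - x \<in> L)"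

definition SO3 :: "(real^3^3) set" where
  "SO3 = {S. orthogonal_matrix S \<and> det S = 1}"

definition Sigma :: "real^3^3 \<Rightarrow> ((real^3) \<times> real) \<Rightarrow> ((real^3) \<times> real)" where
  "Sigma S p = (S *v fst p, snd p)"

end

theory Submission
  imports Defs
begin

lemma rot_ex:
  fixes a b :: "real^3"
  assumes "norm a = norm b"
  shows "\<exists>S\<in>SO3. S *v a = b"
proof -
  obtain f where f: "orthogonal_transformation f" "det (matrix f) = 1" "f a = b"
    using rotation_exists[of a b] assms by auto
  have "linear f" using f(1) orthogonal_transformation by blast
  hence "(\<lambda>x. matrix f *v x) = f" by (rule matrix_vector_mul(2))
  hence "matrix f *v a = b" using f(3) by metis
  moreover have "matrix f \<in> SO3"
    using f(1,2) unfolding SO3_def orthogonal_transformation_matrix by simp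
  ultimately show ?thesis by blast
qed

lemma decomp:
  fixes w :: "real^3"
  assumes "r \<ge> 0" "norm w \<le> 2 * r"
  shows "\<exists>a b. norm a = r \<and> norm b = r \<and> a - b = w"
proof -
  obtain y :: "real^3" where y: "y \<noteq> 0" "orthogonal w y"
    using orthogonal_to_vector_exists[of w] by auto
  define c where "c = sqrt (r^2 - (norm w)^2/4) / norm y"
  define p where "p = c *\<^sub>R y"
  have wp: "w \<bullet> p = 0" using y(2) unfolding p_def orthogonal_def by simp
  have nw: "(norm w)^2 \<le> 4 * r^2"
  proof -
    have "norm w * norm w \<le> (2*r) * (2*r)" using assms by (intro mult_mono) auto
    thus ?thesis by (simp add: power2_eq_square)
  qed
  have pp: "p \<bullet> p = r^2 - (norm w)^2/4"
  proof -
    have "p \<bullet> p = c^2 * (norm y)^2" unfolding p_def by (simp add: dot_square_norm power2_eq_square)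
    also have "\<dots> = r^2 - (norm w)^2/4" unfolding c_def using y(1) nw
      by (simp add: power_divide)
    finally show ?thesis .
  qed
  have ww: "w \<bullet> w = (norm w)^2" by (simp add: power2_norm_eq_inner)
  define a where "a = (1/2) *\<^sub>R w + p"
  define b where "b = p - (1/2) *\<^sub>R w"
  have "a \<bullet> a = r^2" unfolding a_def
    using wp pp ww by (simp add: inner_add_left inner_add_right inner_commute algebra_simps)
  hence na: "norm a = r" using assms(1) by (simp add: norm_eq_sqrt_inner)
  have "b \<bullet> b = r^2" unfolding b_def
    using wp pp ww by (simp add: inner_diff_left inner_diff_right inner_commute algebra_simps)
  hence nb: "norm b = r" using assms(1) by (simp add: norm_eq_sqrt_inner)
  have "a - b = w" unfolding a_def b_def by (simp add: scaleR_left_distrib[symmetric])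
  thus ?thesis using na nb by blast
qed

theorem proposition3p2:
  fixes \<Lambda> :: "((real^3) \<times> real) set"
  assumes "additive_subgroup \<Lambda>"
  shows "(\<forall>S\<in>SO3. Sigma S ` \<Lambda> \<subseteq> \<Lambda>) \<longleftrightarrow>
         (\<exists>H :: real set. additive_subgroup H \<and>
            (\<Lambda> = {0} \<times> H \<or> \<Lambda> = UNIV \<times> H))"
proof
  have z: "0 \<in> \<Lambda>" and ad: "\<And>p q. p \<in> \<Lambda> \<Longrightarrow> q \<in> \<Lambda> \<Longrightarrow> p + q \<in> \<Lambda>"
    and ng: "\<And>p. p \<in> \<Lambda> \<Longrightarrow> - p \<in> \<Lambda>"
    using assms unfolding additive_subgroup_def by auto
  have sb: "\<And>p q. p \<in> \<Lambda> \<Longrightarrow> q \<in> \<Lambda> \<Longrightarrow> p - q \<in> \<Lambda>"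
    using ad ng by (metis diff_conv_add_uminus)
  define H where "H = snd ` \<Lambda>"
  have HS: "additive_subgroup H" unfolding additive_subgroup_def H_def
  proof (intro conjI ballI)
    show "0 \<in> snd ` \<Lambda>" using z by (metis image_eqI snd_zero)
  next
    fix x y assume "x \<in> snd ` \<Lambda>" "y \<in> snd ` \<Lambda>"
    then obtain p q where "p \<in> \<Lambda>" "q \<in> \<Lambda>" "x = snd p" "y = snd q" by auto
    thus "x + y \<in> snd ` \<Lambda>" using ad by (metis image_eqI snd_add)
  next
    fix x assume "x \<in> snd ` \<Lambda>"
    then obtain p where "p \<in> \<Lambda>" "x = snd p" by auto
    thus "- x \<in> snd ` \<Lambda>" using ng by (metis image_eqI snd_uminus)
  qed
  assume inv: "\<forall>S\<in>SO3. Sigma S ` \<Lambda> \<subseteq> \<Lambda>"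
  have rot: "(S *v x, t) \<in> \<Lambda>" if xt0: "(x,t) \<in> \<Lambda>" and S0: "S \<in> SO3" for x t S
  proof -
    have "Sigma S (x,t) \<in> Sigma S ` \<Lambda>" using xt0 by (rule imageI)
    hence "Sigma S (x,t) \<in> \<Lambda>" using inv S0 by blast
    thus ?thesis unfolding Sigma_def by simp
  qed
  show "\<exists>H :: real set. additive_subgroup H \<and> (\<Lambda> = {0} \<times> H \<or> \<Lambda> = UNIV \<times> H)"
  proof (cases "\<exists>x t. (x,t) \<in> \<Lambda> \<and> x \<noteq> 0")
    case True
    then obtain x t where xt: "(x,t) \<in> \<Lambda>" "x \<noteq> 0" by auto
    define r where "r = norm x"
    have rpos: "r > 0" using xt(2) unfolding r_def by simp
    have small: "(w, 0) \<in> \<Lambda>" if w2r: "norm w \<le> 2 * r" for w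
    proof -
      obtain a b where ab: "norm a = r" "norm b = r" "a - b = w"
        using decomp[of r w] rpos w2r by auto
      obtain S1 where "S1 \<in> SO3" "S1 *v x = a" using rot_ex[of x a] ab r_def by auto
      hence A: "(a,t) \<in> \<Lambda>" using rot xt(1) by metis
      obtain S2 where "S2 \<in> SO3" "S2 *v x = b" using rot_ex[of x b] ab r_def by auto
      hence B: "(b,t) \<in> \<Lambda>" using rot xt(1) by metis
      have "(a,t) - (b,t) \<in> \<Lambda>" using sb A B by blast
      thus ?thesis using ab(3) by simp
    qed
    have mult: "(of_nat k *\<^sub>R u, 0) \<in> \<Lambda>" if "(u,0) \<in> \<Lambda>" for u k
    proof (induction k)
      case 0 then show ?case using z by (simp add: zero_prod_def)
    next
      case (Suc k)
      have "(of_nat k *\<^sub>R u, 0) + (u, 0) \<in> \<Lambda>" using ad Suc that by blast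
      thus ?case by (simp add: algebra_simps)
    qed
    have allw: "(w, 0) \<in> \<Lambda>" for w
    proof -
      obtain n :: nat where n: "norm w / (2*r) < of_nat n" using reals_Archimedean2 by blast
      have npos: "(0::real) < of_nat n" using n rpos
        by (meson divide_nonneg_pos le_less_trans norm_ge_zero zero_less_mult_iff zero_less_numeral)
      have "norm w < 2 * r * of_nat n" using n rpos by (simp add: field_simps)
      hence "norm ((1 / of_nat n) *\<^sub>R w) \<le> 2 * r" using npos
        by (simp add: field_simps)
      hence "((1 / of_nat n) *\<^sub>R w, 0) \<in> \<Lambda>" using small by blast
      hence "(of_nat n *\<^sub>R ((1 / of_nat n) *\<^sub>R w), 0) \<in> \<Lambda>" using mult by blast
      thus ?thesis using npos by simp
    qed
    have "\<Lambda> = UNIV \<times> H"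
    proof
      show "\<Lambda> \<subseteq> UNIV \<times> H"
      proof
        fix q assume "q \<in> \<Lambda>"
        hence "snd q \<in> H" unfolding H_def by (rule imageI)
        thus "q \<in> UNIV \<times> H" by (cases q) simp
      qed
      show "UNIV \<times> H \<subseteq> \<Lambda>"
      proof (clarify)
        fix u h assume "h \<in> H"
        then obtain q where "q \<in> \<Lambda>" "h = snd q" unfolding H_def by blast
        then obtain y where y: "(y,h) \<in> \<Lambda>" by (cases q) simp
        have "(u - y, 0) + (y, h) \<in> \<Lambda>" using ad allw y by blast
        thus "(u,h) \<in> \<Lambda>" by simp
      qed
    qed
    thus ?thesis using HS by blast
  next
    case False
    have "\<Lambda> = {0} \<times> H"
    proof
      show "\<Lambda> \<subseteq> {0} \<times> H"
      proof
        fix q assume q: "q \<in> \<Lambda>"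
        hence "snd q \<in> H" unfolding H_def by (rule imageI)
        moreover have "fst q = 0" using q False by (cases q) auto
        ultimately show "q \<in> {0} \<times> H" by (cases q) simp
      qed
      show "{0} \<times> H \<subseteq> \<Lambda>"
      proof clarify
        fix h assume "h \<in> H"
        then obtain q where q: "q \<in> \<Lambda>" "h = snd q" unfolding H_def by blast
        have "fst q = 0" using q False by (cases q) auto
        thus "(0, h) \<in> \<Lambda>" using q by (cases q) simp
      qed
    qed
    thus ?thesis using HS by blast
  qed
next
  assume "\<exists>H :: real set. additive_subgroup H \<and> (\<Lambda> = {0} \<times> H \<or> \<Lambda> = UNIV \<times> H)"
  then obtain H where "\<Lambda> = {0} \<times> H \<or> \<Lambda> = UNIV \<times> H" by blast
  thus "\<forall>S\<in>SO3. Sigma S ` \<Lambda> \<subseteq> \<Lambda>"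
  proof
    assume L: "\<Lambda> = {0} \<times> H"
    show ?thesis
    proof (intro ballI subsetI)
      fix S q assume "q \<in> Sigma S ` \<Lambda>"
      then obtain h where "h \<in> H" "q = Sigma S (0, h)" using L by blast
      thus "q \<in> \<Lambda>" using L unfolding Sigma_def by (simp add: matrix_vector_mult_0_right)
    qed
  next
    assume L: "\<Lambda> = UNIV \<times> H"
    show ?thesis
    proof (intro ballI subsetI)
      fix S q assume "q \<in> Sigma S ` \<Lambda>"
      then obtain u h where "h \<in> H" "q = Sigma S (u, h)" using L by blast
      thus "q \<in> \<Lambda>" using L unfolding Sigma_def by simp
    qed
  qed
qed

end
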